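(* Let $\mathcal O\subseteq\mathrm{dS}^d$ be open and let $C=\{y\in\mathbb R^{1+d}:\beta(x,y)>-1\text{ for all }x\in\mathcal O\}$ (a convex subset of $\mathbb R^{1+d}$). Then $\mathcal O'=C^\circ\cap\mathrm{dS}^d$, where $C^\circ$ is the interior of $C$ in $\mathbb R^{1+d}$.
   Context: Let $d\ge1$, $\beta(x,y)=x_0y_0-x_1y_1-\dots-x_dy_d$ on $\mathbb R^{1+d}$, $\mathrm{dS}^d=\{x:\beta(x,x)=-1\}$. For open $\mathcal O\subseteq\mathrm{dS}^d$, its (open) spacelike complement is $\mathcal O'=$ the interior, relative to $\mathrm{dS}^d$, of $\{y\in\mathrm{dS}^d:\beta(x,y)>-1\ \text{for all } x\in\mathcal O\}$. *)

theory Defs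
  imports "HOL-Analysis.Analysis"
begin

text \<open>Minkowski space R^{1+d}: vectors indexed by 'd option; None is the time
  coordinate x_0, Some i are the d spatial coordinates (d = CARD('d) >= 1).\<close>

definition mink :: "real ^ ('d::finite option) \<Rightarrow> real ^ ('d option) \<Rightarrow> real" where
  "mink x y = x $ None * y $ None - (\<Sum>i\<in>UNIV. x $ Some i * y $ Some i)"

definition deSitter :: "(real ^ ('d::finite option)) set" where
  "deSitter = {x. mink x x = -1}"

definition spacelike_compl :: "(real ^ ('d::finite option)) set \<Rightarrow> (real ^ ('d option)) set" where
  "spacelike_compl U =
     (top_of_set deSitter) interior_of {y \<in> deSitter. \<forall>x\<in>U. mink x y > -1}"

end

theory Submission
  imports Defs
begin

lemma mink_sym: "mink x y = mink y x"
  unfolding mink_def by (simp add: mult.commute)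

lemma mink_add_left: "mink (x + y) z = mink x z + mink y z"
  unfolding mink_def by (simp add: algebra_simps sum.distrib)

lemma mink_add_right: "mink z (x + y) = mink z x + mink z y"
  using mink_add_left mink_sym by metis

lemma mink_scaleR_left: "mink (c *\<^sub>R x) z = c * mink x z"
  unfolding mink_def by (simp add: algebra_simps sum_distrib_left)

lemma mink_scaleR_right: "mink z (c *\<^sub>R x) = c * mink z x"
  using mink_scaleR_left mink_sym by metis

lemma tendsto_mink:
  assumes "(f \<longlongrightarrow> a) F" "(g \<longlongrightarrow> b) F"
  shows "((\<lambda>n. mink (f n) (g n)) \<longlongrightarrow> mink a b) F"
  unfolding mink_def by (intro tendsto_intros assms)

lemma mink_axis_None: "mink p (axis None 1) = p $ None"
  unfolding mink_def by (simp add: axis_def if_distrib cong: if_cong)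

lemma mink_axis_Some: "mink p (axis (Some j) 1) = - p $ Some j"
  unfolding mink_def by (simp add: axis_def if_distrib cong: if_cong)

lemma mink_nondeg:
  assumes "\<And>e. mink p e = 0" shows "p = 0"
proof -
  have "p $ i = 0" for i
    using assms[of "axis i 1"] by (cases i) (auto simp: mink_axis_None mink_axis_Some)
  then show ?thesis by (simp add: vec_eq_iff)
qed

lemma lagrange:
  fixes p y :: "real ^ ('d::finite option)"
  assumes y: "mink y y = -1" and d: "\<delta> > 0"
    and min: "\<And>w. mink w w = -1 \<Longrightarrow> dist w y < \<delta> \<Longrightarrow> mink p w \<ge> mink p y"
  shows "p = (- mink p y) *\<^sub>R y"
proof -
  define a where "a = mink p y"
  have tang: "mink p v = 0" if v: "mink v y = 0" for v
  proof (rule ccontr)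
    assume b0: "mink p v \<noteq> 0"
    define b where "b = mink p v"
    define q where "q = mink v v"
    define w where "w \<tau> = (1/(1 - q*(\<tau>*b)^2)) *\<^sub>R ((1 + q*(\<tau>*b)^2) *\<^sub>R y + (-2*\<tau>*b) *\<^sub>R v)" for \<tau> :: real
    have "(w \<longlongrightarrow> (1/(1 - q*(0*b)^2)) *\<^sub>R ((1 + q*(0*b)^2) *\<^sub>R y + (-2*0*b) *\<^sub>R v)) (at_right 0)"
      unfolding w_def by (intro tendsto_intros) auto
    then have lim: "(w \<longlongrightarrow> y) (at_right 0)" by simp
    have e1: "eventually (\<lambda>\<tau>. dist (w \<tau>) y < \<delta>) (at_right 0)"
      using lim d by (rule tendstoD)
    have "((\<lambda>\<tau>. 1 - q*(\<tau>*b)^2) \<longlongrightarrow> 1 - q*(0*b)^2) (at_right 0)"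
      by (intro tendsto_intros)
    then have e2: "eventually (\<lambda>\<tau>. 1 - q*(\<tau>*b)^2 > 0) (at_right 0)"
      by (rule order_tendstoD) simp
    have "((\<lambda>\<tau>. q*a*\<tau>) \<longlongrightarrow> q*a*0) (at_right 0)"
      by (intro tendsto_intros)
    then have e3: "eventually (\<lambda>\<tau>. q*a*\<tau> < 1) (at_right 0)"
      by (rule order_tendstoD) simp
    have e4: "eventually (\<lambda>\<tau>. \<tau> > 0) (at_right (0::real))"
      by (simp add: eventually_at_right_less)
    obtain \<tau> where t1: "dist (w \<tau>) y < \<delta>" and t2: "1 - q*(\<tau>*b)^2 > 0"
      and t3: "q*a*\<tau> < 1" and t4: "\<tau> > 0"
      using eventually_happens'[OF trivial_limit_at_right_real eventually_conj[OF e1 eventually_conj[OF e2 eventually_conj[OF e3 e4]]]]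
      by blast
    define t where "t = -\<tau>*b"
    define D where "D = 1 - q*t^2"
    have D: "D > 0" using t2 by (simp add: D_def t_def power_mult_distrib)
    have wt: "w \<tau> = (1/D) *\<^sub>R ((1 + q*t^2) *\<^sub>R y + (2*t) *\<^sub>R v)"
      unfolding w_def D_def t_def by (simp add: power_mult_distrib)
    have vy: "mink y v = 0" using v mink_sym by metis
    have ww0: "mink (w \<tau>) (w \<tau>) = - ((1/D)^2 * ((1 + q*t^2)^2 - (2*t)^2 * q))"
      unfolding wt by (simp add: mink_add_left mink_add_right mink_scaleR_left mink_scaleR_right y v vy q_def[symmetric] power2_eq_square algebra_simps)
    have "(1 + q*t^2)^2 - (2*t)^2 * q = D^2" unfolding D_def by (simp add: power2_eq_square algebra_simps)
    then have "- ((1/D)^2 * ((1 + q*t^2)^2 - (2*t)^2 * q)) = -1" using D by (simp add: power_divide)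
    with ww0 have ww: "mink (w \<tau>) (w \<tau>) = -1" by simp
    have "mink p (w \<tau>) = ((1 + q*t^2) * a + 2*t*b) / D"
      unfolding wt by (simp add: mink_add_right mink_scaleR_right a_def b_def)
    with min[OF ww t1] have "((1 + q*t^2) * a + 2*t*b) / D \<ge> a" by (simp add: a_def)
    then have "(1 + q*t^2) * a + 2*t*b \<ge> a * D" using D by (simp add: field_simps)
    then have "2*\<tau>*b^2 * (q*a*\<tau> - 1) \<ge> 0" unfolding D_def t_def by (simp add: algebra_simps power2_eq_square)
    moreover have "2*\<tau>*b^2 * (q*a*\<tau> - 1) < 0"
      using t3 t4 b0 b_def by (intro mult_pos_neg) auto
    ultimately show False by simp
  qed
  define p' where "p' = p + a *\<^sub>R y"
  have "mink p' e = 0" for e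
  proof -
    have "mink (e + mink e y *\<^sub>R y) y = 0"
      by (simp add: mink_add_left mink_scaleR_left y)
    then have "mink p (e + mink e y *\<^sub>R y) = 0" by (rule tang)
    then show ?thesis unfolding p'_def
      by (simp add: mink_add_left mink_add_right mink_scaleR_left mink_scaleR_right a_def mink_sym[of y e] algebra_simps)
  qed
  then have "p' = 0" by (rule mink_nondeg)
  then show ?thesis unfolding p'_def a_def by (simp add: algebra_simps eq_neg_iff_add_eq_0)
qed


theorem mainTheorem12:
  fixes U :: "(real ^ ('d::finite option)) set"
  assumes "openin (top_of_set deSitter) U"
  shows "spacelike_compl U = interior {y. \<forall>x\<in>U. mink x y > -1} \<inter> deSitter"
proof
  define C where "C = {y. \<forall>x\<in>U. mink x y > -1}"
  have Ud: "U \<subseteq> deSitter" using assms openin_imp_subset by auto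
  show "interior {y. \<forall>x\<in>U. mink x y > -1} \<inter> deSitter \<subseteq> spacelike_compl U"
  proof
    fix y assume y: "y \<in> interior {y. \<forall>x\<in>U. mink x y > -1} \<inter> deSitter"
    have "openin (top_of_set deSitter) (deSitter \<inter> interior C)"
      by (auto simp: openin_open)
    moreover have "deSitter \<inter> interior C \<subseteq> {y \<in> deSitter. \<forall>x\<in>U. mink x y > -1}"
      using interior_subset[of C] by (auto simp: C_def)
    ultimately show "y \<in> spacelike_compl U"
      using y unfolding spacelike_compl_def interior_of_def C_def by blast
  qed
  show "spacelike_compl U \<subseteq> interior {y. \<forall>x\<in>U. mink x y > -1} \<inter> deSitter"
  proof
    fix y assume y: "y \<in> spacelike_compl U"
    then obtain T where T: "openin (top_of_set deSitter) T" "y \<in> T"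
        "T \<subseteq> {y \<in> deSitter. \<forall>x\<in>U. mink x y > -1}"
      unfolding spacelike_compl_def interior_of_def by blast
    then obtain T' where "open T'" "T = deSitter \<inter> T'" by (auto simp: openin_open)
    with T obtain \<delta> where d: "\<delta> > 0" "ball y \<delta> \<subseteq> T'"
      by (meson IntD2 open_contains_ball)
    have yd: "y \<in> deSitter" using T by auto
    then have yy: "mink y y = -1" by (simp add: deSitter_def)
    have V: "\<forall>x\<in>U. mink x w > -1" if "mink w w = -1" "dist w y < \<delta>" for w
    proof -
      have "w \<in> ball y \<delta>" using that(2) by (simp add: dist_commute)
      then have "w \<in> T" using that(1) d(2) \<open>T = deSitter \<inter> T'\<close> by (auto simp: deSitter_def)
      then show ?thesis using T(3) by blast
    qed
    show "y \<in> interior {y. \<forall>x\<in>U. mink x y > -1} \<inter> deSitter"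
    proof (rule ccontr)
      assume "\<not> ?thesis"
      then have ni: "y \<notin> interior C" using yd C_def by auto
      have "\<exists>z x. dist z y < 1/(real n+1) \<and> x \<in> U \<and> mink x z \<le> -1" for n
      proof (rule ccontr)
        assume "\<not> ?thesis"
        then have "ball y (1/(real n+1)) \<subseteq> C" by (auto simp: C_def dist_commute not_le)
        then have "ball y (1/(real n+1)) \<subseteq> interior C" by (intro interior_maximal) auto
        moreover have "y \<in> ball y (1/(real n+1))" by (simp add: add_pos_nonneg)
        ultimately have "y \<in> interior C" by blast
        with ni show False by simp
      qed
      then obtain z x where zx: "\<And>n. dist (z n) y < 1/(real n+1)" "\<And>n. x n \<in> U"
          "\<And>n. mink (x n) (z n) \<le> -1"
        by metis
      have xx: "mink (x n) (x n) = -1" for n using zx(2)[of n] Ud by (auto simp: deSitter_def)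
      have zlim: "z \<longlonglongrightarrow> y"
      proof (rule LIMSEQ_I)
        fix r :: real assume r: "r > 0"
        obtain N where N: "inverse (real (Suc N)) < r"
          using reals_Archimedean[OF r] by blast
        show "\<exists>no. \<forall>n\<ge>no. norm (z n - y) < r"
        proof (intro exI allI impI)
          fix n assume "n \<ge> N"
          then have "1/(real n+1) \<le> 1/(real N+1)" by (simp add: frac_le)
          moreover have "1/(real N+1) = inverse (real (Suc N))" by (simp add: inverse_eq_divide)
          ultimately show "norm (z n - y) < r" using zx(1)[of n] N by (simp add: dist_norm)
        qed
      qed
      define mu where "mu n = 1/(1 + norm (x n))" for n
      define p where "p n = mu n *\<^sub>R x n" for n
      have mupos: "mu n > 0" for n unfolding mu_def by (simp add: add_pos_nonneg)
      have normp: "norm (p n) = 1 - mu n" for n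
      proof -
        have "(1::real) + norm (x n) > 0" by (simp add: add_pos_nonneg)
        then show ?thesis unfolding p_def mu_def by (simp add: field_simps add_divide_distrib[symmetric])
      qed
      have "p n \<in> cball 0 1" for n using normp mupos[of n] by simp
      then obtain l r where r: "strict_mono r" "(p \<circ> r) \<longlonglongrightarrow> l"
        using seq_compactE[OF compact_imp_seq_compact[OF compact_cball]] by blast
      define m where "m = 1 - norm l"
      have mlim: "(mu \<circ> r) \<longlonglongrightarrow> m"
      proof -
        have "(\<lambda>n. 1 - norm ((p \<circ> r) n)) \<longlonglongrightarrow> 1 - norm l" by (intro tendsto_intros r)
        then show ?thesis by (simp add: m_def normp comp_def)
      qed
      have zr: "(z \<circ> r) \<longlonglongrightarrow> y" using zlim r(1) by (rule LIMSEQ_subseq_LIMSEQ)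
      have a1: "mink l y \<le> - m"
      proof (rule tendsto_le[OF trivial_limit_sequentially])
        show "(\<lambda>n. - (mu \<circ> r) n) \<longlonglongrightarrow> - m" by (intro tendsto_intros mlim)
        show "(\<lambda>n. mink ((p \<circ> r) n) ((z \<circ> r) n)) \<longlonglongrightarrow> mink l y" by (intro tendsto_mink r zr)
        have "mink (p n) (z n) \<le> - mu n" for n
        proof -
          have "mu n * mink (x n) (z n) \<le> mu n * (-1)"
            using zx(3)[of n] mupos[of n] by (intro mult_left_mono) auto
          then show ?thesis by (simp add: p_def mink_scaleR_left)
        qed
        then show "\<forall>\<^sub>F n in sequentially. mink ((p \<circ> r) n) ((z \<circ> r) n) \<le> - (mu \<circ> r) n"
          by (auto intro!: always_eventually)
      qed
      have a2: "mink l w \<ge> - m" if "mink w w = -1" "dist w y < \<delta>" for w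
      proof (rule tendsto_le[OF trivial_limit_sequentially])
        show "(\<lambda>n. - (mu \<circ> r) n) \<longlonglongrightarrow> - m" by (intro tendsto_intros mlim)
        show "(\<lambda>n. mink ((p \<circ> r) n) w) \<longlonglongrightarrow> mink l w" by (intro tendsto_mink r tendsto_const)
        have "mink (p n) w \<ge> - mu n" for n
        proof -
          have "mink (x n) w > -1" using V[OF that] zx(2) by blast
          then have "mu n * mink (x n) w \<ge> mu n * (-1)" using mupos[of n] by (intro mult_left_mono) auto
          then show ?thesis by (simp add: p_def mink_scaleR_left)
        qed
        then show "\<forall>\<^sub>F n in sequentially. - (mu \<circ> r) n \<le> mink ((p \<circ> r) n) w"
          by (auto intro!: always_eventually)
      qed
      have ly: "mink l y = - m" using a1 a2[OF yy] d by simp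
      have "l = (- mink l y) *\<^sub>R y"
        by (rule lagrange[OF yy d(1)]) (use a2 ly in auto)
      then have lm: "l = m *\<^sub>R y" by (simp add: ly)
      have "m \<noteq> 0"
      proof
        assume "m = 0"
        then have "l = 0" using lm by simp
        then show False using \<open>m = 0\<close> by (simp add: m_def)
      qed
      have "(\<lambda>n. (1 / (mu \<circ> r) n) *\<^sub>R (p \<circ> r) n) \<longlonglongrightarrow> (1/m) *\<^sub>R l"
        using \<open>m \<noteq> 0\<close> by (intro tendsto_intros mlim r)
      moreover have "(1 / (mu \<circ> r) n) *\<^sub>R (p \<circ> r) n = (x \<circ> r) n" for n
        using mupos[of "r n"] by (simp add: p_def)
      moreover have "(1/m) *\<^sub>R l = y" using lm \<open>m \<noteq> 0\<close> by simp
      ultimately have "(x \<circ> r) \<longlonglongrightarrow> y" by (simp add: comp_def)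
      then have "\<forall>\<^sub>F n in sequentially. dist ((x \<circ> r) n) y < \<delta>" using d(1) by (rule tendstoD)
      then obtain n where "dist (x (r n)) y < \<delta>" using eventually_happens' by fastforce
      from V[OF xx this] zx(2)[of "r n"] have "mink (x (r n)) (x (r n)) > -1" by blast
      with xx show False by simp
    qed
  qed
qed

end
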